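(* Let $\rho_1\geq0$, $\rho_2>1$, and let $\{V_m\}_{m\in\mathbb{Z}}$ be a $(\rho_1,\rho_2)$-regular MRA of $L^2(\mathbb{R}^d)$ with scaling function $\phi\in\mathcal{S}^{\rho_1}_{\rho_2}(\mathbb{R}^d)$. Then the reproducing kernel $q_0(x,y)=\sum_{k\in\mathbb{Z}^d}\phi(x-k)\overline{\phi(y-k)}$ of $V_0$ satisfies: there exist constants $c>0$ and $h>0$ such that $$|\partial_x^\alpha\partial_y^\beta q_0(x,y)|\lesssim h^{|\alpha+\beta|}\alpha!^{\rho_1}\beta!^{\rho_1}e^{-c|x-y|^{1/\rho_2}},\qquad \alpha,\beta\in\mathbb{N}^d,\ x,y\in\mathbb{R}^d,$$ with implicit constant independent of $\alpha,\beta,x,y$.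
   Context: For $\rho_1,\rho_2\geq 0$, $\mathcal{S}^{\rho_1}_{\rho_2}(\mathbb{R}^d)$ is the set of $\varphi\in\mathcal{S}(\mathbb{R}^d)$ for which there is $h>0$ with $\sup_{x,\alpha,\beta}\frac{h^{|\alpha+\beta|}}{\alpha!^{\rho_2}\beta!^{\rho_1}}|x^\alpha\partial^\beta\varphi(x)|<\infty$. A multiresolution approximation (MRA) is an increasing sequence $\{V_m\}_{m\in\mathbb{Z}}$ of closed subspaces of $L^2(\mathbb{R}^d)$ such that $\bigcap_m V_m=\{0\}$, $\bigcup_m V_m$ is dense, $f(x)\in V_m\iff f(2x)\in V_{m+1}$, $V_0$ is invariant under integer translations, and there is a scaling function $\phi$ with $\{\phi(x-n)\}_{n\in\mathbb{Z}^d}$ an orthonormal basis of $V_0$. It is $(\rho_1,\rho_2)$-regular if it has a scaling function $\phi\in\mathcal{S}^{\rho_1}_{\rho_2}(\mathbb{R}^d)$. *)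

theory Defs
  imports "HOL-Analysis.Analysis"
begin

text \<open>Euclidean space R^d is rendered as real^'n for a finite index type 'n (d = CARD('n)).
 Multi-indices are functions 'n => nat. Functions are complex valued.\<close>

definition coord_list :: "'n::finite list" where
  "coord_list = (SOME xs. distinct xs \<and> set xs = UNIV)"

definition pdiff :: "'n::finite \<Rightarrow> (real^'n \<Rightarrow> complex) \<Rightarrow> real^'n \<Rightarrow> complex" where
  "pdiff i f x = vector_derivative (\<lambda>t. f (x + t *\<^sub>R axis i 1)) (at 0)"

definition Dmulti :: "('n::finite \<Rightarrow> nat) \<Rightarrow> (real^'n \<Rightarrow> complex) \<Rightarrow> real^'n \<Rightarrow> complex" where
  "Dmulti \<alpha> f = foldr (\<lambda>i g. (pdiff i ^^ \<alpha> i) g) coord_list f"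

definition mi_abs :: "('n::finite \<Rightarrow> nat) \<Rightarrow> nat" where
  "mi_abs \<alpha> = (\<Sum>i\<in>UNIV. \<alpha> i)"

definition mi_fact :: "('n::finite \<Rightarrow> nat) \<Rightarrow> real" where
  "mi_fact \<alpha> = (\<Prod>i\<in>UNIV. fact (\<alpha> i))"

definition mi_pow :: "real^'n::finite \<Rightarrow> ('n \<Rightarrow> nat) \<Rightarrow> real" where
  "mi_pow x \<alpha> = (\<Prod>i\<in>UNIV. (x $ i) ^ \<alpha> i)"

definition smooth_fun :: "(real^'n::finite \<Rightarrow> complex) \<Rightarrow> bool" where
  "smooth_fun f \<longleftrightarrow> (\<forall>\<beta> x. Dmulti \<beta> f differentiable (at x))"

definition schwartz :: "(real^'n::finite \<Rightarrow> complex) set" where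
  "schwartz = {f. smooth_fun f \<and>
      (\<forall>\<alpha> \<beta>. \<exists>B. \<forall>x. \<bar>mi_pow x \<alpha>\<bar> * cmod (Dmulti \<beta> f x) \<le> B)}"

definition GS :: "real \<Rightarrow> real \<Rightarrow> (real^'n::finite \<Rightarrow> complex) set" where
  "GS \<rho>1 \<rho>2 = {f. f \<in> schwartz \<and> (\<exists>h>0. \<exists>B. \<forall>x \<alpha> \<beta>.
      h ^ (mi_abs \<alpha> + mi_abs \<beta>) / (mi_fact \<alpha> powr \<rho>2 * mi_fact \<beta> powr \<rho>1)
        * (\<bar>mi_pow x \<alpha>\<bar> * cmod (Dmulti \<beta> f x)) \<le> B)}"

text \<open>L^2(R^d): measurable square-integrable functions (elements of L^2 are identified up to
 a.e. equality; subspaces below are required to be closed under a.e. modification).\<close>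
definition L2 :: "(real^'n::finite \<Rightarrow> complex) set" where
  "L2 = {f. f \<in> borel_measurable lborel \<and> integrable lborel (\<lambda>x. (cmod (f x))\<^sup>2)}"

definition L2_inner :: "(real^'n::finite \<Rightarrow> complex) \<Rightarrow> (real^'n \<Rightarrow> complex) \<Rightarrow> complex" where
  "L2_inner f g = integral\<^sup>L lborel (\<lambda>x. f x * cnj (g x))"

definition L2_norm :: "(real^'n::finite \<Rightarrow> complex) \<Rightarrow> real" where
  "L2_norm f = sqrt (integral\<^sup>L lborel (\<lambda>x. (cmod (f x))\<^sup>2))"

definition closed_L2_subspace :: "(real^'n::finite \<Rightarrow> complex) set \<Rightarrow> bool" where
  "closed_L2_subspace V \<longleftrightarrow> V \<subseteq> L2 \<and> (\<lambda>x. 0) \<in> V \<and>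
     (\<forall>f\<in>V. \<forall>g\<in>V. (\<lambda>x. f x + g x) \<in> V) \<and>
     (\<forall>f\<in>V. \<forall>c::complex. (\<lambda>x. c * f x) \<in> V) \<and>
     (\<forall>f\<in>V. \<forall>g\<in>L2. (AE x in lborel. f x = g x) \<longrightarrow> g \<in> V) \<and>
     (\<forall>F f. (\<forall>k. F k \<in> V) \<longrightarrow> f \<in> L2 \<longrightarrow>
        (\<lambda>k. L2_norm (\<lambda>x. F k x - f x)) \<longlonglongrightarrow> 0 \<longrightarrow> f \<in> V)"

definition integer_points :: "(real^'n::finite) set" where
  "integer_points = {k. \<forall>i. k $ i \<in> \<int>}"

definition is_scaling_function ::
  "(int \<Rightarrow> (real^'n::finite \<Rightarrow> complex) set) \<Rightarrow> (real^'n \<Rightarrow> complex) \<Rightarrow> bool" where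
  "is_scaling_function V \<phi> \<longleftrightarrow>
     (\<forall>n\<in>integer_points. (\<lambda>x. \<phi> (x - n)) \<in> V 0) \<and>
     (\<forall>n\<in>integer_points. \<forall>k\<in>integer_points.
        L2_inner (\<lambda>x. \<phi> (x - n)) (\<lambda>x. \<phi> (x - k)) = (if n = k then 1 else 0)) \<and>
     (\<forall>f\<in>V 0. \<forall>\<epsilon>>0. \<exists>K c. finite K \<and> K \<subseteq> integer_points \<and>
        L2_norm (\<lambda>x. f x - (\<Sum>k\<in>K. c k * \<phi> (x - k))) < \<epsilon>)"

definition is_MRA :: "(int \<Rightarrow> (real^'n::finite \<Rightarrow> complex) set) \<Rightarrow> bool" where
  "is_MRA V \<longleftrightarrow>
     (\<forall>m. closed_L2_subspace (V m)) \<and>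
     (\<forall>m. V m \<subseteq> V (m + 1)) \<and>
     (\<forall>f. (\<forall>m. f \<in> V m) \<longrightarrow> (AE x in lborel. f x = 0)) \<and>
     (\<forall>f\<in>L2. \<forall>\<epsilon>>0. \<exists>m. \<exists>g\<in>V m. L2_norm (\<lambda>x. f x - g x) < \<epsilon>) \<and>
     (\<forall>m f. f \<in> V m \<longleftrightarrow> (\<lambda>x. f ((2::real) *\<^sub>R x)) \<in> V (m + 1)) \<and>
     (\<forall>f\<in>V 0. \<forall>k\<in>integer_points. (\<lambda>x. f (x - k)) \<in> V 0) \<and>
     (\<exists>\<phi>. is_scaling_function V \<phi>)"

definition regular_MRA_with ::
  "real \<Rightarrow> real \<Rightarrow> (int \<Rightarrow> (real^'n::finite \<Rightarrow> complex) set) \<Rightarrow> (real^'n \<Rightarrow> complex) \<Rightarrow> bool" where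
  "regular_MRA_with \<rho>1 \<rho>2 V \<phi> \<longleftrightarrow> is_MRA V \<and> is_scaling_function V \<phi> \<and> \<phi> \<in> GS \<rho>1 \<rho>2"

definition kernel0 :: "(real^'n::finite \<Rightarrow> complex) \<Rightarrow> real^'n \<Rightarrow> real^'n \<Rightarrow> complex" where
  "kernel0 \<phi> x y = infsum (\<lambda>k. \<phi> (x - k) * cnj (\<phi> (y - k))) integer_points"

end

theory Submission
  imports Defs
begin

lemma frac_le_powr: "0 \<le> (x::real) \<Longrightarrow> x \<le> 1 \<Longrightarrow> 0 < s \<Longrightarrow> s \<le> 1 \<Longrightarrow> x \<le> x powr s"
  by (metis powr_mono' powr_one)

lemma powr_subadd:
  fixes a b s :: real
  assumes "0 \<le> a" "0 \<le> b" "0 < s" "s \<le> 1"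
  shows "(a + b) powr s \<le> a powr s + b powr s"
proof (cases "a + b = 0")
  case True
  then show ?thesis using assms by simp
next
  case False
  define t where "t = a + b"
  have t: "t > 0" using False assms unfolding t_def by simp
  have "a / t \<le> (a / t) powr s" using assms t by (intro frac_le_powr) (auto simp: t_def)
  moreover have "b / t \<le> (b / t) powr s" using assms t by (intro frac_le_powr) (auto simp: t_def)
  moreover have "a / t + b / t = 1" using t by (simp add: t_def add_divide_distrib[symmetric])
  ultimately have "1 \<le> (a / t) powr s + (b / t) powr s"
    by linarith
  also have "\<dots> = (a powr s + b powr s) / t powr s"
    using assms t by (simp add: powr_divide add_divide_distrib)
  finally show ?thesis using t by (simp add: t_def le_divide_eq)
qed

lemma exp_ge_term: "0 \<le> (y::real) \<Longrightarrow> y ^ m / fact m \<le> exp y"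
proof -
  assume y: "0 \<le> y"
  have s: "(\<lambda>n. y ^ n / fact n) sums exp y"
    using exp_converges[of y] by (simp add: divide_inverse mult.commute)
  have e: "(\<Sum>n<Suc m. y ^ n / fact n) = (\<Sum>n<m. y ^ n / fact n) + y ^ m / fact m" by simp
  have "0 \<le> (\<Sum>n<m. y ^ n / fact n)" using y by (intro sum_nonneg) auto
  then have "y ^ m / fact m \<le> (\<Sum>n<Suc m. y ^ n / fact n)" using e by linarith
  also have "\<dots> \<le> (\<Sum>n. y ^ n / fact n)"
    by (rule sum_le_suminf[OF sums_summable[OF s]]) (use y in auto)
  also have "\<dots> = exp y" using s by (rule sums_unique[symmetric])
  finally show ?thesis .
qed

lemma exp_poly_bound:
  fixes a s :: real
  assumes a: "a > 0" and s: "s > 0"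
  shows "\<exists>C>0. \<forall>t::real. exp (- a * \<bar>t\<bar> powr s) \<le> C / (1 + t\<^sup>2)"
proof -
  define m where "m = nat \<lceil>2 / s\<rceil>"
  have ms: "2 \<le> real m * s"
  proof -
    have "2 / s \<le> real m" unfolding m_def by linarith
    then show ?thesis using s by (simp add: divide_le_eq mult.commute)
  qed
  define C where "C = 2 * max 1 (fact m / a ^ m)"
  have Cpos: "C > 0" unfolding C_def by simp
  have "exp (- a * \<bar>t\<bar> powr s) \<le> C / (1 + t\<^sup>2)" for t
  proof (cases "\<bar>t\<bar> \<ge> 1")
    case True
    define y where "y = a * \<bar>t\<bar> powr s"
    have ypos: "y > 0" using True a unfolding y_def by simp
    have "y ^ m / fact m \<le> exp y" using ypos by (intro exp_ge_term) simp
    then have e1: "exp (- y) \<le> fact m / y ^ m"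
      using ypos by (simp add: exp_minus field_simps)
    have "y ^ m = a ^ m * \<bar>t\<bar> powr (real m * s)"
      unfolding y_def using True
      by (simp add: power_mult_distrib powr_realpow[symmetric] powr_powr mult.commute)
    moreover have "\<bar>t\<bar> powr (real m * s) \<ge> \<bar>t\<bar> powr 2"
      using True ms by (intro powr_mono) auto
    moreover have "\<bar>t\<bar> powr 2 = t\<^sup>2" using True by (simp add: powr_numeral)
    ultimately have ym: "y ^ m \<ge> a ^ m * t\<^sup>2" using a by (simp add: mult_left_mono)
    have t2: "t\<^sup>2 \<ge> 1" using True by (metis abs_ge_self le_trans one_le_power power2_abs)
    have "fact m / y ^ m \<le> fact m / (a ^ m * t\<^sup>2)"
      using ym a t2 ypos by (intro divide_left_mono) (auto intro!: mult_pos_pos)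
    also have "\<dots> = (fact m / a ^ m) / t\<^sup>2" by simp
    also have "\<dots> \<le> (fact m / a ^ m) * (2 / (1 + t\<^sup>2))"
    proof -
      have "1 / t\<^sup>2 \<le> 2 / (1 + t\<^sup>2)" using t2 by (simp add: divide_simps)
      then have "(fact m / a ^ m) * (1 / t\<^sup>2) \<le> (fact m / a ^ m) * (2 / (1 + t\<^sup>2))"
        using a by (intro mult_left_mono) auto
      then show ?thesis by simp
    qed
    also have "\<dots> = (2 * (fact m / a ^ m)) / (1 + t\<^sup>2)" by simp
    also have "\<dots> \<le> C / (1 + t\<^sup>2)"
      unfolding C_def by (intro divide_right_mono) (auto intro: add_nonneg_nonneg)
    finally show ?thesis using e1 unfolding y_def by simp
  next
    case False
    have "exp (- a * \<bar>t\<bar> powr s) \<le> 1" using a by simp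
    also have "1 \<le> 2 / (1 + t\<^sup>2)"
    proof -
      have "\<bar>t\<bar> * \<bar>t\<bar> \<le> 1 * 1" using False by (intro mult_mono) auto
      then have "t\<^sup>2 \<le> 1" by (simp add: power2_eq_square)
      moreover have "0 < 1 + t\<^sup>2" by (simp add: add_pos_nonneg)
      ultimately show ?thesis by (simp add: le_divide_eq)
    qed
    also have "\<dots> \<le> C / (1 + t\<^sup>2)" unfolding C_def by (simp add: divide_right_mono)
    finally show ?thesis .
  qed
  then show ?thesis using Cpos by blast
qed

lemma sum_le_suminf_set:
  fixes g :: "nat \<Rightarrow> real"
  assumes "summable g" "\<And>n. 0 \<le> g n" "finite A"
  shows "sum g A \<le> suminf g"
proof -
  obtain k where k: "A \<subseteq> {..<k}" using assms(3) finite_nat_iff_bounded by blast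
  have "sum g A \<le> sum g {..<k}" using k assms(2) by (intro sum_mono2) auto
  also have "\<dots> \<le> suminf g" using assms(1,2) by (intro sum_le_suminf) auto
  finally show ?thesis .
qed

lemma summable_inv_sq: "summable (\<lambda>n::nat. 1 / (1 + (real n)\<^sup>2))"
proof -
  have s: "summable (\<lambda>n::nat. inverse ((real n) ^ 2))"
    using inverse_power_summable[of 2, where 'a=real] by simp
  then have s2: "summable (\<lambda>n::nat. 2 * inverse ((real (Suc n)) ^ 2))"
    by (subst summable_Suc_iff[where f="\<lambda>n. 2 * inverse ((real n) ^ 2)"]) (intro summable_mult)
  show ?thesis
  proof (rule summable_comparison_test'[OF s2])
    fix n :: nat
    have e: "(real n + 1)\<^sup>2 = 2 * (1 + (real n)\<^sup>2) - (real n - 1)\<^sup>2"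
      by (simp add: power2_eq_square algebra_simps)
    have "(real n + 1)\<^sup>2 \<le> 2 * (1 + (real n)\<^sup>2)" unfolding e by simp
    moreover have "0 < (real n + 1)\<^sup>2" by simp
    moreover have "0 < 1 + (real n)\<^sup>2" by (simp add: add_pos_nonneg)
    ultimately have "1 / (1 + (real n)\<^sup>2) \<le> 2 / (real n + 1)\<^sup>2"
      by (simp add: divide_simps)
    then show "norm (1 / (1 + (real n)\<^sup>2)) \<le> 2 * inverse ((real (Suc n)) ^ 2)"
      by (simp add: divide_inverse add.commute)
  qed
qed

lemma aux_lin: "(A::real) \<le> B \<Longrightarrow> X = 4 * (1 + A) - 3 * Q - 5/3 \<Longrightarrow> 0 \<le> 3 * Q \<Longrightarrow> X \<le> 4 * (1 + B)"
  by (simp add: algebra_simps)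

lemma key_shift:
  fixes u m :: real
  assumes u: "0 \<le> u" "u < 1" and m: "m \<in> \<int>"
  shows "1 / (1 + (u - m)\<^sup>2) \<le> 4 / (1 + m\<^sup>2)"
proof -
  have key: "1 + m\<^sup>2 \<le> 4 * (1 + (u - m)\<^sup>2)"
  proof (cases "m \<le> 0")
    case True
    have e: "(u - m)\<^sup>2 = u\<^sup>2 + (- 2 * u * m) + m\<^sup>2" by (simp add: power2_eq_square algebra_simps)
    have "0 \<le> - 2 * u * m" using True u by (simp add: mult_nonneg_nonpos)
    then show ?thesis unfolding e using zero_le_power2[of u] zero_le_power2[of m]
      by (smt (verit))
  next
    case False
    then have m1: "m \<ge> 1" using m by (metis Ints_cases of_int_0_less_iff of_int_less_1_iff not_le zero_less_one_class.zero_le_one le_less_linear leI less_int_code(1) of_int_le_1_iff int_one_le_iff_zero_less)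
    have "(m - 1)\<^sup>2 \<le> (m - u)\<^sup>2" using m1 u by (intro power_mono) auto
    moreover have "(m - u)\<^sup>2 = (u - m)\<^sup>2" by (simp add: power2_commute)
    moreover have "1 + m\<^sup>2 = 4 * (1 + (m - 1)\<^sup>2) - 3 * (m - 4/3)\<^sup>2 - 5/3"
      by (simp add: power2_eq_square algebra_simps)
    moreover have "0 \<le> 3 * (m - 4/3)\<^sup>2" by simp
    ultimately show ?thesis
      using aux_lin[of "(m - 1)\<^sup>2" "(u - m)\<^sup>2" "1 + m\<^sup>2" "(m - 4/3)\<^sup>2"] by simp
  qed
  have "0 < 1 + (u - m)\<^sup>2" "0 < 1 + m\<^sup>2" by (simp_all add: add_pos_nonneg)
  then show ?thesis using key by (simp add: divide_simps)
qed

definition S0 :: real where "S0 = (\<Sum>n. 1 / (1 + (real n)\<^sup>2))"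

lemma S0_nonneg: "0 \<le> S0"
  unfolding S0_def by (intro suminf_nonneg summable_inv_sq) (simp add: add_pos_nonneg)

lemma sum_nonneg_ints:
  fixes G :: "real set"
  assumes "finite G" "G \<subseteq> \<int>" "\<And>m. m \<in> G \<Longrightarrow> 0 \<le> m"
  shows "(\<Sum>m\<in>G. 1 / (1 + m\<^sup>2)) \<le> S0"
proof -
  define N where "N = (\<lambda>m. nat \<lfloor>m\<rfloor>) ` G"
  have GN: "G = real ` N"
  proof
    show "G \<subseteq> real ` N"
    proof
      fix m assume m: "m \<in> G"
      then obtain z where z: "m = of_int z" using assms(2) by (auto elim: Ints_cases)
      then have "z \<ge> 0" using assms(3)[OF m] by simp
      then have "m = real (nat \<lfloor>m\<rfloor>)" using z by simp
      then show "m \<in> real ` N" unfolding N_def using m by blast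
    qed
  next
    show "real ` N \<subseteq> G"
    proof
      fix x assume "x \<in> real ` N"
      then obtain m where m: "m \<in> G" and x: "x = real (nat \<lfloor>m\<rfloor>)" unfolding N_def by auto
      then obtain z where z: "m = of_int z" using assms(2) by (auto elim: Ints_cases)
      then have "z \<ge> 0" using assms(3)[OF m] by simp
      then have "x = m" using x z by simp
      then show "x \<in> G" using m by simp
    qed
  qed
  have fN: "finite N" unfolding N_def using assms(1) by simp
  have "(\<Sum>m\<in>G. 1 / (1 + m\<^sup>2)) = (\<Sum>n\<in>N. 1 / (1 + (real n)\<^sup>2))"
    unfolding GN by (subst sum.reindex) (auto simp: inj_on_def)
  also have "\<dots> \<le> S0" unfolding S0_def
    using summable_inv_sq fN by (intro sum_le_suminf_set) (auto simp: add_pos_nonneg)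
  finally show ?thesis .
qed

lemma sum1d:
  fixes t :: real and F :: "real set"
  assumes "finite F" "F \<subseteq> \<int>"
  shows "(\<Sum>j\<in>F. 1 / (1 + (t - j)\<^sup>2)) \<le> 8 * S0"
proof -
  define n0 :: real where "n0 = of_int \<lfloor>t\<rfloor>"
  define u where "u = t - n0"
  have u: "0 \<le> u" "u < 1" unfolding u_def n0_def by linarith+
  have n0Z: "n0 \<in> \<int>" unfolding n0_def by simp
  define F1 where "F1 = {j \<in> F. n0 \<le> j}"
  define F2 where "F2 = {j \<in> F. j < n0}"
  have fF: "finite F1" "finite F2" unfolding F1_def F2_def using assms(1) by auto
  have FF: "F = F1 \<union> F2" unfolding F1_def F2_def by auto
  have "(\<Sum>j\<in>F. 1 / (1 + (j - n0)\<^sup>2)) =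
       (\<Sum>j\<in>F1. 1 / (1 + (j - n0)\<^sup>2)) + (\<Sum>j\<in>F2. 1 / (1 + (j - n0)\<^sup>2))"
    unfolding FF using fF by (intro sum.union_disjoint) (auto simp: F1_def F2_def)
  also have "(\<Sum>j\<in>F1. 1 / (1 + (j - n0)\<^sup>2)) = (\<Sum>m\<in>(\<lambda>j. j - n0) ` F1. 1 / (1 + m\<^sup>2))"
    by (subst sum.reindex) (auto simp: inj_on_def)
  also have "\<dots> \<le> S0"
    using fF assms(2) n0Z by (intro sum_nonneg_ints) (auto simp: F1_def)
  also have "(\<Sum>j\<in>F2. 1 / (1 + (j - n0)\<^sup>2)) = (\<Sum>m\<in>(\<lambda>j. n0 - j) ` F2. 1 / (1 + m\<^sup>2))"
    by (subst sum.reindex) (auto simp: inj_on_def power2_commute)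
  also have "\<dots> \<le> S0"
    using fF assms(2) n0Z by (intro sum_nonneg_ints) (auto simp: F2_def)
  finally have B: "(\<Sum>j\<in>F. 1 / (1 + (j - n0)\<^sup>2)) \<le> 2 * S0" by simp
  have "(\<Sum>j\<in>F. 1 / (1 + (t - j)\<^sup>2)) \<le> (\<Sum>j\<in>F. 4 / (1 + (j - n0)\<^sup>2))"
  proof (rule sum_mono)
    fix j assume j: "j \<in> F"
    have "t - j = u - (j - n0)" unfolding u_def by simp
    moreover have "j - n0 \<in> \<int>" using j assms(2) n0Z by auto
    ultimately show "1 / (1 + (t - j)\<^sup>2) \<le> 4 / (1 + (j - n0)\<^sup>2)"
      using key_shift[OF u, of "j - n0"] by metis
  qed
  also have "\<dots> = 4 * (\<Sum>j\<in>F. 1 / (1 + (j - n0)\<^sup>2))" by (simp add: sum_distrib_left)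
  finally show ?thesis using B by simp
qed

lemma exp_le_prod:
  fixes v :: "real^'n" and a s :: real
  assumes a: "a > 0" and s: "s > 0"
  shows "exp (- a * norm v powr s) \<le> (\<Prod>i\<in>UNIV. exp (- (a / real CARD('n)) * \<bar>v $ i\<bar> powr s))"
proof -
  define d where "d = real CARD('n)"
  have d: "d > 0" unfolding d_def by simp
  have "(\<Sum>i\<in>UNIV. \<bar>v $ i\<bar> powr s) \<le> of_nat (card (UNIV::'n set)) * norm v powr s"
    by (intro sum_bounded_above powr_mono2) (use s component_le_norm_cart in auto)
  then have "(a / d) * (\<Sum>i\<in>UNIV. \<bar>v $ i\<bar> powr s) \<le> (a / d) * (d * norm v powr s)"
    using d a unfolding d_def by (intro mult_left_mono) auto
  also have "(a / d) * (d * norm v powr s) = a * norm v powr s" using d by simp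
  finally have "(\<Sum>i\<in>UNIV. (a / d) * \<bar>v $ i\<bar> powr s) \<le> a * norm v powr s"
    by (simp add: sum_distrib_left)
  then have "exp (- a * norm v powr s) \<le> exp (- (\<Sum>i\<in>UNIV. (a / d) * \<bar>v $ i\<bar> powr s))"
    by simp
  also have "\<dots> = (\<Prod>i\<in>UNIV. exp (- (a / d) * \<bar>v $ i\<bar> powr s))"
    by (simp add: exp_sum[symmetric] sum_negf)
  finally show ?thesis unfolding d_def .
qed

lemma lattice_fin:
  fixes a s :: real
  assumes a: "a > 0" and s: "s > 0"
  shows "\<exists>C\<ge>0. \<forall>(x::real^'n) F. finite F \<longrightarrow> F \<subseteq> integer_points \<longrightarrow>
            (\<Sum>k\<in>F. exp (- a * norm (x - k) powr s)) \<le> C"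
proof -
  define d where "d = real CARD('n)"
  have d: "d > 0" unfolding d_def by simp
  obtain C1 where C1: "C1 > 0" "\<And>t::real. exp (- (a / d) * \<bar>t\<bar> powr s) \<le> C1 / (1 + t\<^sup>2)"
    using exp_poly_bound[of "a / d" s] a d s by auto
  define C where "C = (C1 * (8 * S0)) ^ CARD('n)"
  have "(\<Sum>k\<in>F. exp (- a * norm (x - k) powr s)) \<le> C"
    if F: "finite F" "F \<subseteq> integer_points" for x :: "real^'n" and F
  proof -
    define h where "h i r = C1 * (1 / (1 + (x $ i - r)\<^sup>2))" for i r
    define B where "B i = (\<lambda>k. k $ i) ` F" for i
    have hnn: "0 \<le> h i r" for i r unfolding h_def using C1 by (simp add: add_pos_nonneg)
    have "(\<Sum>k\<in>F. exp (- a * norm (x - k) powr s)) \<le> (\<Sum>k\<in>F. \<Prod>i\<in>UNIV. h i (k $ i))"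
    proof (rule sum_mono)
      fix k assume "k \<in> F"
      have "exp (- a * norm (x - k) powr s) \<le> (\<Prod>i\<in>UNIV. exp (- (a / d) * \<bar>(x - k) $ i\<bar> powr s))"
        using exp_le_prod[OF a s, of "x - k"] unfolding d_def .
      also have "\<dots> \<le> (\<Prod>i\<in>UNIV. h i (k $ i))"
        using C1(2) unfolding h_def by (intro prod_mono) auto
      finally show "exp (- a * norm (x - k) powr s) \<le> (\<Prod>i\<in>UNIV. h i (k $ i))" .
    qed
    also have "\<dots> = (\<Sum>p\<in>vec_nth ` F. \<Prod>i\<in>UNIV. h i (p i))"
      by (subst sum.reindex) (auto simp: inj_on_def vec_nth_inject)
    also have "\<dots> \<le> (\<Sum>p\<in>PiE UNIV B. \<Prod>i\<in>UNIV. h i (p i))"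
      using F(1) hnn by (intro sum_mono2) (auto simp: B_def finite_PiE prod_nonneg)
    also have "\<dots> = (\<Prod>i\<in>UNIV. \<Sum>r\<in>B i. h i r)"
      using F(1) by (subst prod_sum_PiE) (auto simp: B_def)
    also have "\<dots> \<le> (\<Prod>i\<in>(UNIV::'n set). C1 * (8 * S0))"
    proof (rule prod_mono)
      fix i :: 'n
      have Bi: "finite (B i)" "B i \<subseteq> \<int>" using F unfolding B_def integer_points_def by auto
      have "(\<Sum>r\<in>B i. h i r) = C1 * (\<Sum>r\<in>B i. 1 / (1 + (x $ i - r)\<^sup>2))"
        unfolding h_def by (simp add: sum_distrib_left)
      also have "\<dots> \<le> C1 * (8 * S0)"
        using sum1d[OF Bi, of "x $ i"] C1 by (intro mult_left_mono) auto
      finally show "0 \<le> (\<Sum>r\<in>B i. h i r) \<and> (\<Sum>r\<in>B i. h i r) \<le> C1 * (8 * S0)"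
        using hnn by (auto intro: sum_nonneg)
    qed
    also have "\<dots> = C" unfolding C_def by simp
    finally show ?thesis .
  qed
  moreover have "C \<ge> 0" unfolding C_def using C1 S0_nonneg by simp
  ultimately show ?thesis by blast
qed

lemma lattice_sum:
  fixes a s :: real
  assumes a: "a > 0" and s: "s > 0"
  shows "\<exists>C\<ge>0. \<forall>(x::real^'n).
            (\<lambda>k. exp (- a * norm (x - k) powr s)) summable_on integer_points \<and>
            (\<Sum>\<^sub>\<infinity>k\<in>integer_points. exp (- a * norm (x - k) powr s)) \<le> C"
proof -
  obtain C where C: "C \<ge> 0" "\<And>(x::real^'n) F. finite F \<Longrightarrow> F \<subseteq> integer_points \<Longrightarrow>
            (\<Sum>k\<in>F. exp (- a * norm (x - k) powr s)) \<le> C"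
    using lattice_fin[OF a s, where 'n='n] by blast
  have "(\<lambda>k. exp (- a * norm (x - k) powr s)) summable_on integer_points \<and>
            (\<Sum>\<^sub>\<infinity>k\<in>integer_points. exp (- a * norm (x - k) powr s)) \<le> C" for x :: "real^'n"
  proof
    show sm: "(\<lambda>k. exp (- a * norm (x - k) powr s)) summable_on integer_points"
      by (rule nonneg_bdd_above_summable_on) (use C(2) in \<open>auto intro!: bdd_aboveI2\<close>)
    show "(\<Sum>\<^sub>\<infinity>k\<in>integer_points. exp (- a * norm (x - k) powr s)) \<le> C"
      by (rule infsum_le_finite_sums[OF sm]) (use C(2) in auto)
  qed
  then show ?thesis using C(1) by blast
qed

lemma power_powr_real: "((x::real) ^ N) powr r = (x powr r) ^ N"
  by (induction N) (auto simp: powr_mult)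

lemma frac_cross: "0 < (P::real) \<Longrightarrow> 0 < f \<Longrightarrow> X / P \<le> K / f \<Longrightarrow> f * X \<le> K * P"
  by (simp add: field_simps)
lemma le_div2: "0 < (X::real) \<Longrightarrow> f * X \<le> Y \<Longrightarrow> f \<le> Y / X"
  by (simp add: field_simps)
lemma le_div3: "0 < (F::real) \<Longrightarrow> 0 < f \<Longrightarrow> U * f \<le> K * F \<Longrightarrow> U / F \<le> K / f"
  by (simp add: field_simps)

lemma exp_sums_real: "(\<lambda>n. (y::real) ^ n / fact n) sums exp y"
  using exp_converges[of y] by (simp add: divide_inverse mult.commute)

lemma core1d:
  fixes \<rho> f u K :: real
  assumes \<rho>: "\<rho> > 0" and f: "f \<ge> 0" and u: "u \<ge> 0"
    and H: "\<And>N. u ^ N * f \<le> K * fact N powr \<rho>"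
  shows "f \<le> K * 2 powr \<rho> * exp (- (\<rho> / 2) * u powr (1 / \<rho>))"
proof -
  have K: "K \<ge> 0" using H[of 0] f by simp
  show ?thesis
  proof (cases "f = 0")
    case True
    then show ?thesis using K by simp
  next
    case False
    then have fpos: "f > 0" using f by simp
    define a where "a = u powr (1 / \<rho>)"
    define Q where "Q = (K / f) powr (1 / \<rho>)"
    have a: "a \<ge> 0" unfolding a_def by simp
    have apow: "a powr \<rho> = u" unfolding a_def using \<rho> u by (simp add: powr_powr powr_one)
    have bnd: "a ^ N / fact N \<le> Q" for N
    proof -
      have "(a ^ N / fact N) powr \<rho> = u ^ N / fact N powr \<rho>"
        by (simp add: powr_divide power_powr_real apow)
      also have "\<dots> \<le> K / f"
        using H[of N] fpos by (intro le_div3) auto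
      finally have le: "(a ^ N / fact N) powr \<rho> \<le> K / f" .
      have "a ^ N / fact N = ((a ^ N / fact N) powr \<rho>) powr (1 / \<rho>)"
        using \<rho> a by (simp add: powr_powr powr_one)
      also have "\<dots> \<le> Q" unfolding Q_def using le \<rho> by (intro powr_mono2) auto
      finally show ?thesis .
    qed
    have s1: "(\<lambda>N. (a / 2) ^ N / fact N) sums exp (a / 2)"
      by (rule exp_sums_real)
    have s2: "(\<lambda>N. Q * (1 / 2) ^ N) sums (Q * 2)"
      using geometric_sums[of "1 / 2 :: real"] by (intro sums_mult) simp
    have "exp (a / 2) \<le> Q * 2"
    proof (rule sums_le[OF _ s1 s2])
      fix N
      have "(a / 2) ^ N / fact N = (a ^ N / fact N) * (1 / 2) ^ N" by (simp add: power_divide)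
      also have "\<dots> \<le> Q * (1 / 2) ^ N" using bnd[of N] by (intro mult_right_mono) auto
      finally show "(a / 2) ^ N / fact N \<le> Q * (1 / 2) ^ N" .
    qed
    then have e1: "exp (a / 2) / 2 \<le> Q" by simp
    have "(exp (a / 2) / 2) powr \<rho> \<le> Q powr \<rho>"
      using e1 \<rho> by (intro powr_mono2) auto
    also have "Q powr \<rho> = K / f" unfolding Q_def using \<rho> K fpos by (simp add: powr_powr powr_one)
    also have "(exp (a / 2) / 2) powr \<rho> = exp (a * \<rho> / 2) / 2 powr \<rho>"
      by (simp only: powr_divide exp_powr_real times_divide_eq_left)
    finally have "exp (a * \<rho> / 2) / 2 powr \<rho> \<le> K / f" .
    then have "f * exp (a * \<rho> / 2) \<le> K * 2 powr \<rho>"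
      using fpos by (intro frac_cross) auto
    then have "f \<le> K * 2 powr \<rho> / exp (a * \<rho> / 2)" by (intro le_div2) auto
    also have "\<dots> = K * 2 powr \<rho> * exp (- (\<rho> / 2) * a)"
    proof -
      have e: "- (\<rho> / 2) * a = - (a * \<rho> / 2)" by simp
      have "exp (- (\<rho> / 2) * a) = inverse (exp (a * \<rho> / 2))" unfolding e exp_minus ..
      then show ?thesis by (simp only: divide_inverse)
    qed
    finally show ?thesis unfolding a_def .
  qed
qed

lemma mi_single:
  fixes i :: "'n::finite"
  shows "mi_abs (\<lambda>j. if j = i then N else 0) = N"
    and "mi_fact (\<lambda>j. if j = i then N else 0) = fact N"
    and "mi_pow z (\<lambda>j. if j = i then N else 0) = (z $ i) ^ N"
proof -
  show "mi_abs (\<lambda>j. if j = i then N else 0) = N" unfolding mi_abs_def by simp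
  have "(\<Prod>j\<in>UNIV. fact (if j = i then N else 0) :: real) = (\<Prod>j\<in>UNIV. if j = i then fact N else 1)"
    by (rule prod.cong) auto
  then show "mi_fact (\<lambda>j. if j = i then N else 0) = fact N" unfolding mi_fact_def by simp
  have "(\<Prod>j\<in>UNIV. (z $ j) ^ (if j = i then N else 0)) = (\<Prod>j\<in>UNIV. if j = i then (z $ i) ^ N else 1)"
    by (rule prod.cong) auto
  then show "mi_pow z (\<lambda>j. if j = i then N else 0) = (z $ i) ^ N" unfolding mi_pow_def by simp
qed

lemma mi_fact_pos: "mi_fact \<beta> > 0"
  unfolding mi_fact_def by (intro prod_pos) auto

lemma arith_gs:
  fixes FN Fb hb hN zN f B :: real
  assumes "0 < FN" "0 < Fb" "0 < hb" "(hN * hb) / (FN * Fb) * (zN * f) \<le> B"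
  shows "(hN * zN) * f \<le> (B * Fb / hb) * FN"
  using assms by (simp add: field_simps)

lemma gs_decay:
  fixes \<phi> :: "real^'n::finite \<Rightarrow> complex"
  assumes \<rho>2: "\<rho>2 > 0" and \<phi>: "\<phi> \<in> GS \<rho>1 \<rho>2"
  shows "\<exists>c0>0. \<exists>h>0. \<exists>B\<ge>0. \<forall>\<beta> z. cmod (Dmulti \<beta> \<phi> z)
            \<le> B * (mi_fact \<beta> powr \<rho>1 / h ^ mi_abs \<beta>) * exp (- c0 * norm z powr (1 / \<rho>2))"
proof -
  obtain h B where h: "h > 0" and GSb: "\<And>x \<alpha> \<beta>. h ^ (mi_abs \<alpha> + mi_abs \<beta>) / (mi_fact \<alpha> powr \<rho>2 * mi_fact \<beta> powr \<rho>1)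
        * (\<bar>mi_pow x \<alpha>\<bar> * cmod (Dmulti \<beta> \<phi> x)) \<le> B"
    using \<phi> unfolding GS_def by blast
  have B: "B \<ge> 0"
  proof -
    have "0 \<le> h ^ (mi_abs (\<lambda>_::'n. 0) + mi_abs (\<lambda>_::'n. 0)) / (mi_fact (\<lambda>_::'n. 0) powr \<rho>2 * mi_fact (\<lambda>_::'n. 0) powr \<rho>1)
        * (\<bar>mi_pow 0 (\<lambda>_::'n. 0)\<bar> * cmod (Dmulti (\<lambda>_::'n. 0) \<phi> 0))"
      using h by (intro mult_nonneg_nonneg divide_nonneg_nonneg) auto
    then show ?thesis using GSb[where x=0 and \<alpha>="\<lambda>_. 0" and \<beta>="\<lambda>_. 0"] by linarith
  qed
  define d where "d = real CARD('n)"
  have d: "d > 0" unfolding d_def by simp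
  define s where "s = 1 / \<rho>2"
  have s: "s > 0" unfolding s_def using \<rho>2 by simp
  define c0 where "c0 = (\<rho>2 / 2) * (h / d) powr s"
  have c0: "c0 > 0" unfolding c0_def using \<rho>2 h d by simp
  have main: "cmod (Dmulti \<beta> \<phi> z) \<le> (B * 2 powr \<rho>2) * (mi_fact \<beta> powr \<rho>1 / h ^ mi_abs \<beta>) * exp (- c0 * norm z powr s)"
    for \<beta> z
  proof -
    define f where "f = cmod (Dmulti \<beta> \<phi> z)"
    define Fb where "Fb = mi_fact \<beta> powr \<rho>1"
    define hb where "hb = h ^ mi_abs \<beta>"
    have Fb: "Fb > 0" unfolding Fb_def using mi_fact_pos[of \<beta>] by simp
    have hb: "hb > 0" unfolding hb_def using h by simp
    define K where "K = B * Fb / hb"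
    obtain i where i: "\<And>j. \<bar>z $ j\<bar> \<le> \<bar>z $ i\<bar>"
    proof -
      define M where "M = Max (range (\<lambda>j. \<bar>z $ j\<bar>))"
      have "M \<in> range (\<lambda>j. \<bar>z $ j\<bar>)" unfolding M_def by (intro Max_in) auto
      then obtain i where "M = \<bar>z $ i\<bar>" by auto
      moreover have "\<bar>z $ j\<bar> \<le> M" for j unfolding M_def by (intro Max_ge) auto
      ultimately show ?thesis using that by metis
    qed
    have H: "(h * \<bar>z $ i\<bar>) ^ N * f \<le> K * fact N powr \<rho>2" for N
    proof -
      have "h ^ (N + mi_abs \<beta>) / (fact N powr \<rho>2 * Fb) * (\<bar>z $ i\<bar> ^ N * f) \<le> B"
        using GSb[where x=z and \<alpha>="\<lambda>j. if j = i then N else 0" and \<beta>=\<beta>]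
        by (simp add: mi_single Fb_def f_def power_abs)
      then have "(h ^ N * hb) / (fact N powr \<rho>2 * Fb) * (\<bar>z $ i\<bar> ^ N * f) \<le> B"
        by (simp add: hb_def power_add)
      then have "(h ^ N * \<bar>z $ i\<bar> ^ N) * f \<le> (B * Fb / hb) * fact N powr \<rho>2"
        using Fb hb by (intro arith_gs) auto
      then show ?thesis by (simp add: K_def power_mult_distrib)
    qed
    have f0: "f \<ge> 0" unfolding f_def by simp
    have c1: "f \<le> K * 2 powr \<rho>2 * exp (- (\<rho>2 / 2) * (h * \<bar>z $ i\<bar>) powr (1 / \<rho>2))"
      using core1d[OF \<rho>2 f0 _ H] h by simp
    have "norm z \<le> (\<Sum>j\<in>UNIV. \<bar>z $ j\<bar>)" by (rule norm_le_l1_cart)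
    also have "\<dots> \<le> of_nat (card (UNIV :: 'n set)) * \<bar>z $ i\<bar>" by (intro sum_bounded_above i)
    finally have nz: "norm z \<le> d * \<bar>z $ i\<bar>" unfolding d_def by simp
    have "(h / d) * norm z \<le> (h / d) * (d * \<bar>z $ i\<bar>)" using nz h d by (intro mult_left_mono) auto
    also have "\<dots> = h * \<bar>z $ i\<bar>" using d by simp
    finally have hz: "(h / d) * norm z \<le> h * \<bar>z $ i\<bar>" .
    have "c0 * norm z powr s = (\<rho>2 / 2) * ((h / d) * norm z) powr s"
      unfolding c0_def by (simp only: powr_mult mult.assoc)
    also have "\<dots> \<le> (\<rho>2 / 2) * (h * \<bar>z $ i\<bar>) powr s"
      using hz h d s \<rho>2 by (intro mult_left_mono powr_mono2) auto
    finally have "exp (- (\<rho>2 / 2) * (h * \<bar>z $ i\<bar>) powr s) \<le> exp (- c0 * norm z powr s)"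
      by simp
    then have "K * 2 powr \<rho>2 * exp (- (\<rho>2 / 2) * (h * \<bar>z $ i\<bar>) powr s) \<le> K * 2 powr \<rho>2 * exp (- c0 * norm z powr s)"
      using B Fb hb unfolding K_def by (intro mult_left_mono) auto
    then have "f \<le> K * 2 powr \<rho>2 * exp (- c0 * norm z powr s)" using c1 unfolding s_def by linarith
    then show ?thesis unfolding K_def f_def Fb_def hb_def by (simp add: mult_ac)
  qed
  have B2: "B * 2 powr \<rho>2 \<ge> 0" using B by simp
  show ?thesis
    using main c0 h B2 unfolding s_def by blast
qed

lemma infsum_diff':
  fixes f g :: "'a \<Rightarrow> 'b::{topological_ab_group_add, t2_space}"
  assumes "f summable_on A" "g summable_on A"
  shows "infsum (\<lambda>x. f x - g x) A = infsum f A - infsum g A"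
    and "(\<lambda>x. f x - g x) summable_on A"
proof -
  have u: "(\<lambda>x. - g x) summable_on A" using assms(2) by (simp add: summable_on_uminus)
  show "infsum (\<lambda>x. f x - g x) A = infsum f A - infsum g A"
    using infsum_add[OF assms(1) u] by (simp add: infsum_uminus)
  show "(\<lambda>x. f x - g x) summable_on A"
    using summable_on_add[OF assms(1) u] by simp
qed

lemma summable_dom:
  fixes f :: "'a \<Rightarrow> complex"
  assumes "M summable_on A" "\<And>k. k \<in> A \<Longrightarrow> norm (f k) \<le> M k"
  shows "f summable_on A" "(\<lambda>k. norm (f k)) summable_on A"
proof -
  show n: "(\<lambda>k. norm (f k)) summable_on A"
    using assms by (intro summable_on_comparison_test[OF assms(1)]) auto
  then show "f summable_on A" by (rule abs_summable_summable)
qed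

lemma infsum_tendsto_0:
  fixes r :: "'k \<Rightarrow> 'a \<Rightarrow> real"
  assumes N: "N summable_on A"
    and lim: "\<And>k. k \<in> A \<Longrightarrow> ((\<lambda>t. r k t) \<longlongrightarrow> 0) F"
    and bnd: "eventually (\<lambda>t. \<forall>k\<in>A. 0 \<le> r k t \<and> r k t \<le> N k) F"
  shows "((\<lambda>t. infsum (\<lambda>k. r k t) A) \<longlongrightarrow> 0) F"
proof (rule tendstoI)
  fix e :: real assume e: "e > 0"
  obtain X where X: "finite X" "X \<subseteq> A" "dist (sum N X) (infsum N A) \<le> e / 3"
    using has_sum_finite_approximation[OF has_sum_infsum[OF N], of "e / 3"] e by auto
  have NX: "N summable_on X" using X(1) by simp
  have tail: "infsum N (A - X) \<le> e / 3"
  proof -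
    have "infsum N (A - X) = infsum N A - sum N X"
      using infsum_Diff[OF N NX X(2)] X(1) by simp
    moreover have "\<bar>sum N X - infsum N A\<bar> \<le> e / 3" using X(3) by (simp add: dist_real_def)
    ultimately show ?thesis by linarith
  qed
  define e' where "e' = e / (3 * (real (card X) + 1))"
  have e': "e' > 0" unfolding e'_def using e by (simp add: add_pos_nonneg)
  have ev1: "eventually (\<lambda>t. \<forall>k\<in>X. r k t < e') F"
  proof (rule eventually_ball_finite[OF X(1)], rule ballI)
    fix k assume "k \<in> X"
    then have "((\<lambda>t. r k t) \<longlongrightarrow> 0) F" using lim X(2) by auto
    from tendstoD[OF this e'] show "eventually (\<lambda>t. r k t < e') F"
      by eventually_elim (simp add: dist_real_def)
  qed
  show "eventually (\<lambda>t. dist (infsum (\<lambda>k. r k t) A) 0 < e) F"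
    using ev1 bnd
  proof eventually_elim
    case (elim t)
    have sm: "(\<lambda>k. r k t) summable_on A"
      using elim(2) by (intro summable_on_comparison_test[OF N]) auto
    have smX: "(\<lambda>k. r k t) summable_on X" using X(1) by simp
    have smD: "(\<lambda>k. r k t) summable_on (A - X)" using summable_on_Diff[OF sm smX X(2)] .
    have ND: "N summable_on (A - X)" using summable_on_Diff[OF N NX X(2)] .
    have split: "infsum (\<lambda>k. r k t) A = sum (\<lambda>k. r k t) X + infsum (\<lambda>k. r k t) (A - X)"
      using infsum_Diff[OF sm smX X(2)] X(1) by simp
    have "sum (\<lambda>k. r k t) X \<le> sum (\<lambda>k. e') X"
      using elim(1) by (intro sum_mono) auto
    also have "\<dots> = real (card X) * e'" by simp
    also have "\<dots> < e / 3"
    proof -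
      have "real (card X) * e' = e / 3 * (real (card X) / (real (card X) + 1))"
        unfolding e'_def by (simp add: field_simps)
      also have "\<dots> < e / 3 * 1" using e by (intro mult_strict_left_mono) auto
      finally show ?thesis by simp
    qed
    finally have s1: "sum (\<lambda>k. r k t) X < e / 3" .
    have "infsum (\<lambda>k. r k t) (A - X) \<le> infsum N (A - X)"
      using elim(2) by (intro infsum_mono[OF smD ND]) auto
    then have s2: "infsum (\<lambda>k. r k t) (A - X) \<le> e / 3" using tail by linarith
    have nn: "0 \<le> infsum (\<lambda>k. r k t) A" using elim(2) by (intro infsum_nonneg) auto
    show ?case using split s1 s2 nn by (simp add: dist_real_def)
  qed
qed


lemma mvt_vd:
  fixes f f' :: "real \<Rightarrow> complex"
  assumes der: "\<And>t. \<bar>t\<bar> < 1 \<Longrightarrow> (f has_vector_derivative f' t) (at t)"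
    and bd: "\<And>t. \<bar>t\<bar> < 1 \<Longrightarrow> norm (f' t) \<le> M"
    and h: "\<bar>h\<bar> < 1"
  shows "norm (f h - f 0) \<le> M * \<bar>h\<bar>"
proof -
  have gen: "norm (f b - f a) \<le> M * (b - a)" if ab: "a < b" "\<bar>a\<bar> < 1" "\<bar>b\<bar> < 1" for a b
  proof -
    have cont: "continuous_on {a..b} f"
    proof (rule continuous_at_imp_continuous_on, rule ballI)
      fix x assume "x \<in> {a..b}"
      then have "\<bar>x\<bar> < 1" using ab by auto
      then show "isCont f x" using der has_vector_derivative_continuous by blast
    qed
    have d: "(f has_derivative (\<lambda>y. y *\<^sub>R f' x)) (at x)" if "a < x" "x < b" for x
      using der[of x] that ab unfolding has_vector_derivative_def by auto
    obtain x where x: "x \<in> {a<..<b}" "norm (f b - f a) \<le> norm ((b - a) *\<^sub>R f' x)"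
      using mvt_general[OF ab(1) cont d] by blast
    have "\<bar>x\<bar> < 1" using x(1) ab by auto
    then have "norm ((b - a) *\<^sub>R f' x) \<le> (b - a) * M" using bd[of x] ab by (simp add: mult_left_mono)
    then show ?thesis using x(2) by (simp add: mult.commute)
  qed
  consider "h = 0" | "h > 0" | "h < 0" by linarith
  then show ?thesis
  proof cases
    case 1 then show ?thesis by simp
  next
    case 2 then show ?thesis using gen[of 0 h] h by simp
  next
    case 3
    then have "norm (f 0 - f h) \<le> M * (0 - h)" using gen[of h 0] h by simp
    then show ?thesis using 3 by (simp add: norm_minus_commute)
  qed
qed

lemma termwise_vd:
  fixes g g' :: "'k \<Rightarrow> real \<Rightarrow> complex" and M :: "'k \<Rightarrow> real"
  assumes der: "\<And>k t. k \<in> A \<Longrightarrow> \<bar>t\<bar> < 1 \<Longrightarrow> (g k has_vector_derivative g' k t) (at t)"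
    and bd: "\<And>k t. k \<in> A \<Longrightarrow> \<bar>t\<bar> < 1 \<Longrightarrow> norm (g' k t) \<le> M k"
    and M: "M summable_on A"
    and sm: "\<And>t. \<bar>t\<bar> < 1 \<Longrightarrow> (\<lambda>k. g k t) summable_on A"
  shows "((\<lambda>t. infsum (\<lambda>k. g k t) A) has_vector_derivative infsum (\<lambda>k. g' k 0) A) (at 0)"
proof -
  define L where "L = infsum (\<lambda>k. g' k 0) A"
  have smd: "(\<lambda>k. g' k 0) summable_on A" using bd[of _ 0] by (intro summable_dom(1)[OF M]) auto
  have mv: "norm (g k h - g k 0) \<le> M k * \<bar>h\<bar>" if "k \<in> A" "\<bar>h\<bar> < 1" for k h
    using that by (intro mvt_vd[of "g k" "g' k" "M k" h] der bd) auto
  define r where "r k h = norm (g k (0 + h) - g k 0 - h *\<^sub>R g' k 0) / norm h" for k h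
  have lim: "((\<lambda>h. r k h) \<longlongrightarrow> 0) (at 0)" if "k \<in> A" for k
    using der[OF that, of 0] unfolding has_vector_derivative_def has_derivative_at r_def by auto
  have ev: "eventually (\<lambda>h::real. h \<noteq> 0 \<and> \<bar>h\<bar> < 1) (at 0)"
    unfolding eventually_at by (rule exI[of _ 1]) auto
  have bnd: "eventually (\<lambda>h. \<forall>k\<in>A. 0 \<le> r k h \<and> r k h \<le> 2 * M k) (at 0)"
    using ev
  proof eventually_elim
    case (elim h)
    show ?case
    proof (intro ballI conjI)
      fix k assume k: "k \<in> A"
      show "0 \<le> r k h" unfolding r_def by simp
      have "norm (g k h - g k 0 - h *\<^sub>R g' k 0) \<le> norm (g k h - g k 0) + norm (h *\<^sub>R g' k 0)"
        by (rule norm_triangle_ineq4)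
      also have "\<dots> \<le> M k * \<bar>h\<bar> + \<bar>h\<bar> * M k"
        using mv[OF k] elim bd[OF k, of 0] by (intro add_mono) (auto simp: mult_left_mono)
      finally have "norm (g k h - g k 0 - h *\<^sub>R g' k 0) \<le> (2 * M k) * \<bar>h\<bar>" by (simp add: mult_ac)
      then show "r k h \<le> 2 * M k" unfolding r_def using elim by (simp add: divide_le_eq)
    qed
  qed
  have N2: "(\<lambda>k. 2 * M k) summable_on A" using M by (intro summable_on_cmult_right)
  have T: "((\<lambda>h. infsum (\<lambda>k. r k h) A) \<longlongrightarrow> 0) (at 0)"
    by (rule infsum_tendsto_0[OF N2 lim bnd])
  have key: "eventually (\<lambda>h. norm (infsum (\<lambda>k. g k (0 + h)) A - infsum (\<lambda>k. g k 0) A - h *\<^sub>R L) / norm h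
      \<le> infsum (\<lambda>k. r k h) A) (at 0)"
    using ev bnd
  proof eventually_elim
    case (elim h)
    have s0: "(\<lambda>k. g k 0) summable_on A" using sm[of 0] by simp
    have sh: "(\<lambda>k. g k h) summable_on A" using sm elim by auto
    have sL: "(\<lambda>k. h *\<^sub>R g' k 0) summable_on A" using smd by auto
    have e1: "infsum (\<lambda>k. g k (0 + h)) A - infsum (\<lambda>k. g k 0) A - h *\<^sub>R L
        = infsum (\<lambda>k. g k h - g k 0 - h *\<^sub>R g' k 0) A"
      unfolding L_def infsum_scaleR_right[symmetric]
      using infsum_diff'[OF sh s0] infsum_diff'[OF infsum_diff'(2)[OF sh s0] sL] by simp
    have rs: "(\<lambda>k. r k h) summable_on A"
      using elim(2) by (intro summable_on_comparison_test[OF N2]) auto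
    have ns: "(\<lambda>k. norm (g k h - g k 0 - h *\<^sub>R g' k 0)) summable_on A"
    proof -
      have "(\<lambda>k. r k h * norm h) summable_on A" using rs by (rule summable_on_cmult_left)
      moreover have "r k h * norm h = norm (g k h - g k 0 - h *\<^sub>R g' k 0)" for k
        unfolding r_def using elim by simp
      ultimately show ?thesis by simp
    qed
    have "norm (infsum (\<lambda>k. g k h - g k 0 - h *\<^sub>R g' k 0) A)
        \<le> infsum (\<lambda>k. norm (g k h - g k 0 - h *\<^sub>R g' k 0)) A"
      using ns by (intro norm_infsum_bound) auto
    then have "norm (infsum (\<lambda>k. g k h - g k 0 - h *\<^sub>R g' k 0) A) / norm h
        \<le> infsum (\<lambda>k. norm (g k h - g k 0 - h *\<^sub>R g' k 0)) A / norm h"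
      by (intro divide_right_mono) auto
    also have "\<dots> = infsum (\<lambda>k. r k h) A"
      unfolding r_def divide_inverse using infsum_cmult_left[of "inverse (norm h)" _ A] ns by simp
    finally show ?case unfolding e1 .
  qed
  have "((\<lambda>h. norm (infsum (\<lambda>k. g k (0 + h)) A - infsum (\<lambda>k. g k 0) A - h *\<^sub>R L) / norm h) \<longlongrightarrow> 0) (at 0)"
    by (rule tendsto_sandwich[OF _ key tendsto_const T]) auto
  then show ?thesis
    unfolding has_vector_derivative_def has_derivative_at L_def[symmetric]
    by (auto intro: bounded_linear_scaleR_left)
qed

lemma coord_list_props: "distinct (coord_list :: 'n::finite list) \<and> set (coord_list :: 'n list) = UNIV"
proof -
  have "\<exists>xs::'n list. distinct xs \<and> set xs = UNIV"
    using finite_distinct_list[of "UNIV :: 'n set"] by auto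
  then show ?thesis unfolding coord_list_def by (rule someI_ex)
qed

definition Dm :: "'n::finite list \<Rightarrow> ('n \<Rightarrow> nat) \<Rightarrow> (real^'n \<Rightarrow> complex) \<Rightarrow> real^'n \<Rightarrow> complex" where
  "Dm xs \<gamma> f = foldr (\<lambda>i g. (pdiff i ^^ \<gamma> i) g) xs f"

lemma Dm_Nil[simp]: "Dm [] \<gamma> f = f" by (simp add: Dm_def)
lemma Dm_Cons: "Dm (i # xs) \<gamma> f = (pdiff i ^^ \<gamma> i) (Dm xs \<gamma> f)" by (simp add: Dm_def)

lemma Dm_cong: "(\<And>i. i \<in> set xs \<Longrightarrow> \<gamma> i = \<gamma>' i) \<Longrightarrow> Dm xs \<gamma> f = Dm xs \<gamma>' f"
  unfolding Dm_def by (induction xs) auto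

lemma Dm_zero: "(\<And>i. i \<in> set xs \<Longrightarrow> \<gamma> i = 0) \<Longrightarrow> Dm xs \<gamma> f = f"
  unfolding Dm_def by (induction xs) auto

lemma Dm_suffix:
  assumes "coord_list = ys @ xs"
  shows "Dm xs \<gamma> f = Dmulti (\<lambda>i. if i \<in> set xs then \<gamma> i else 0) f"
proof -
  have d: "distinct (ys @ xs)" using coord_list_props assms by metis
  let ?g = "\<lambda>i. if i \<in> set xs then \<gamma> i else 0"
  have "Dmulti ?g f = Dm (ys @ xs) ?g f" unfolding Dmulti_def Dm_def assms ..
  also have "\<dots> = Dm ys ?g (Dm xs ?g f)" by (simp add: Dm_def)
  also have "\<dots> = Dm xs ?g f" using d by (intro Dm_zero) auto
  also have "\<dots> = Dm xs \<gamma> f" by (intro Dm_cong) auto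
  finally show ?thesis by simp
qed

lemma Dmulti_commute:
  assumes H: "\<And>\<gamma> \<gamma>' i. pdiff i (Dmulti \<gamma> \<psi>) = Dmulti \<gamma>' \<psi> \<Longrightarrow> pdiff i (T (Dmulti \<gamma> \<psi>)) = T (Dmulti \<gamma>' \<psi>)"
  shows "Dmulti \<gamma> (T \<psi>) = T (Dmulti \<gamma> \<psi>)"
proof -
  have "coord_list = ys @ xs \<Longrightarrow> Dm xs \<gamma> (T \<psi>) = T (Dm xs \<gamma> \<psi>)" for xs ys \<gamma>
  proof (induction xs arbitrary: ys \<gamma>)
    case Nil
    then show ?case by simp
  next
    case (Cons i xs)
    have cl: "coord_list = (ys @ [i]) @ xs" using Cons.prems by simp
    have d: "distinct (ys @ i # xs)" using coord_list_props Cons.prems by metis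
    have ixs: "i \<notin> set xs" using d by simp
    have step: "(pdiff i ^^ j) (T (Dm xs \<gamma> \<psi>)) = T ((pdiff i ^^ j) (Dm xs \<gamma> \<psi>))" for j
    proof (induction j)
      case 0
      then show ?case by simp
    next
      case (Suc j)
      have e: "(pdiff i ^^ k) (Dm xs \<gamma> \<psi>) = Dm (i # xs) (\<gamma>(i := k)) \<psi>" for k
        using ixs by (simp add: Dm_Cons, intro arg_cong[where f="(pdiff i ^^ k)"] Dm_cong) auto
      have e2: "(pdiff i ^^ k) (Dm xs \<gamma> \<psi>) = Dmulti (\<lambda>l. if l \<in> set (i # xs) then (\<gamma>(i := k)) l else 0) \<psi>" for k
        unfolding e by (rule Dm_suffix) (use Cons.prems in simp)
      have "pdiff i ((pdiff i ^^ j) (Dm xs \<gamma> \<psi>)) = (pdiff i ^^ Suc j) (Dm xs \<gamma> \<psi>)" by simp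
      then have "pdiff i (T ((pdiff i ^^ j) (Dm xs \<gamma> \<psi>))) = T ((pdiff i ^^ Suc j) (Dm xs \<gamma> \<psi>))"
        unfolding e2 by (rule H)
      then show ?case using Suc by simp
    qed
    show ?case using step Cons.IH[OF cl] by (simp add: Dm_Cons)
  qed
  from this[of "[]" coord_list \<gamma>] show ?thesis unfolding Dmulti_def Dm_def by simp
qed


lemma line_vd:
  fixes \<psi> :: "real^'n::finite \<Rightarrow> complex"
  assumes "\<psi> differentiable (at (a + t *\<^sub>R v))"
  shows "((\<lambda>s. \<psi> (a + s *\<^sub>R v)) has_vector_derivative frechet_derivative \<psi> (at (a + t *\<^sub>R v)) v) (at t)"
proof -
  define D where "D = frechet_derivative \<psi> (at (a + t *\<^sub>R v))"
  have d: "(\<psi> has_derivative D) (at (a + t *\<^sub>R v))" using assms frechet_derivative_works unfolding D_def by blast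
  have p: "((\<lambda>s. a + s *\<^sub>R v) has_derivative (\<lambda>h. h *\<^sub>R v)) (at t)"
    by (auto intro!: derivative_eq_intros)
  have c: "((\<lambda>s. \<psi> (a + s *\<^sub>R v)) has_derivative (\<lambda>h. D (h *\<^sub>R v))) (at t)"
    by (rule has_derivative_compose[OF p d])
  have l: "linear D" using d has_derivative_linear by blast
  have "(\<lambda>h. D (h *\<^sub>R v)) = (\<lambda>h. h *\<^sub>R D v)" using l by (simp add: linear_scale)
  then show ?thesis using c unfolding has_vector_derivative_def D_def by simp
qed

lemma pdiff_frechet:
  fixes \<psi> :: "real^'n::finite \<Rightarrow> complex"
  assumes "\<psi> differentiable (at p)"
  shows "pdiff i \<psi> p = frechet_derivative \<psi> (at p) (axis i 1)"
  unfolding pdiff_def using line_vd[of \<psi> p 0 "axis i 1"] assms by (intro vector_derivative_at) simp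

lemma path_vd:
  fixes \<psi> :: "real^'n::finite \<Rightarrow> complex"
  assumes "\<And>z. \<psi> differentiable (at z)"
  shows "((\<lambda>t. \<psi> (y + t *\<^sub>R axis i 1)) has_vector_derivative pdiff i \<psi> (y + t *\<^sub>R axis i 1)) (at t)"
  using line_vd[of \<psi> y t "axis i 1"] pdiff_frechet[of \<psi> "y + t *\<^sub>R axis i 1" i] assms by simp

lemma pdiff_cnj:
  fixes \<psi> :: "real^'n::finite \<Rightarrow> complex"
  assumes "\<And>z. \<psi> differentiable (at z)"
  shows "pdiff i (\<lambda>z. cnj (\<psi> z)) = (\<lambda>z. cnj (pdiff i \<psi> z))"
proof
  fix y
  have "((\<lambda>t. cnj (\<psi> (y + t *\<^sub>R axis i 1))) has_vector_derivative cnj (pdiff i \<psi> (y + 0 *\<^sub>R axis i 1))) (at 0)"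
    by (intro has_vector_derivative_cnj path_vd assms)
  then show "pdiff i (\<lambda>z. cnj (\<psi> z)) y = cnj (pdiff i \<psi> y)"
    unfolding pdiff_def by (intro vector_derivative_at) simp
qed

lemma Dmulti_cnj:
  fixes \<phi> :: "real^'n::finite \<Rightarrow> complex"
  assumes "\<And>\<gamma> z. Dmulti \<gamma> \<phi> differentiable (at z)"
  shows "Dmulti \<gamma> (\<lambda>z. cnj (\<phi> z)) = (\<lambda>z. cnj (Dmulti \<gamma> \<phi> z))"
proof -
  have "Dmulti \<gamma> ((\<lambda>\<psi> z. cnj (\<psi> z)) \<phi>) = (\<lambda>\<psi> z. cnj (\<psi> z)) (Dmulti \<gamma> \<phi>)"
  proof (rule Dmulti_commute)
    fix \<gamma> \<gamma>' i assume "pdiff i (Dmulti \<gamma> \<phi>) = Dmulti \<gamma>' \<phi>"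
    then show "pdiff i (\<lambda>z. cnj (Dmulti \<gamma> \<phi> z)) = (\<lambda>z. cnj (Dmulti \<gamma>' \<phi> z))"
      using pdiff_cnj[of "Dmulti \<gamma> \<phi>" i] assms by simp
  qed
  then show ?thesis by simp
qed

lemma shift_exp_bound:
  fixes w :: "real^'n::finite" and a s t :: real
  assumes a: "a \<ge> 0" and s: "0 < s" "s \<le> 1" and t: "\<bar>t\<bar> < 1"
  shows "exp (- a * norm (w + t *\<^sub>R axis i 1) powr s) \<le> exp a * exp (- a * norm w powr s)"
proof -
  have "norm w \<le> norm (w + t *\<^sub>R axis i 1) + norm (t *\<^sub>R (axis i 1 :: real^'n))"
    using norm_triangle_ineq4[of "w + t *\<^sub>R axis i 1" "t *\<^sub>R axis i 1"] by simp
  moreover have "norm (t *\<^sub>R (axis i 1 :: real^'n)) = \<bar>t\<bar>" by simp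
  ultimately have n: "norm w \<le> norm (w + t *\<^sub>R axis i 1) + \<bar>t\<bar>" by simp
  have "norm w powr s \<le> (norm (w + t *\<^sub>R axis i 1) + \<bar>t\<bar>) powr s"
    using n s by (intro powr_mono2) auto
  also have "\<dots> \<le> norm (w + t *\<^sub>R axis i 1) powr s + \<bar>t\<bar> powr s"
    using s by (intro powr_subadd) auto
  also have "\<bar>t\<bar> powr s \<le> 1"
    using t s by (intro powr_le1) auto
  finally have "norm w powr s \<le> norm (w + t *\<^sub>R axis i 1) powr s + 1" by simp
  then have "a * norm w powr s \<le> a * (norm (w + t *\<^sub>R axis i 1) powr s + 1)"
    using a by (intro mult_left_mono) auto
  then have "- a * norm (w + t *\<^sub>R axis i 1) powr s \<le> a + - a * norm w powr s"
    by (simp add: algebra_simps)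
  then have "exp (- a * norm (w + t *\<^sub>R axis i 1) powr s) \<le> exp (a + - a * norm w powr s)"
    by simp
  also have "\<dots> = exp a * exp (- a * norm w powr s)" by (rule exp_add)
  finally show ?thesis .
qed

lemma TW:
  fixes \<psi> c :: "real^'n::finite \<Rightarrow> complex"
  assumes diff: "\<And>z. \<psi> differentiable (at z)"
    and b0: "\<And>z. norm (\<psi> z) \<le> A0 * exp (- a * norm z powr s)"
    and b1: "\<And>z. norm (pdiff i \<psi> z) \<le> A1 * exp (- a * norm z powr s)"
    and cb: "\<And>k. norm (c k) \<le> Cc"
    and a: "a > 0" and s: "0 < s" "s \<le> 1"
  shows "pdiff i (\<lambda>z. \<Sum>\<^sub>\<infinity>k\<in>integer_points. c k * \<psi> (z - k))
       = (\<lambda>z. \<Sum>\<^sub>\<infinity>k\<in>integer_points. c k * pdiff i \<psi> (z - k))"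
proof
  fix y :: "real^'n"
  obtain CL where CL: "\<And>x::real^'n. (\<lambda>k. exp (- a * norm (x - k) powr s)) summable_on integer_points"
    using lattice_sum[OF a s(1), where 'n='n] by blast
  have Cc: "Cc \<ge> 0" using cb[of 0] norm_ge_zero order_trans by blast
  have A1: "A1 \<ge> 0"
  proof -
    have "0 \<le> A1 * exp (- a * norm (0::real^'n) powr s)" using b1[of 0] norm_ge_zero order_trans by blast
    then show ?thesis by (simp add: zero_le_mult_iff)
  qed
  define e :: "real^'n" where "e = axis i 1"
  define g where "g k t = c k * \<psi> (y + t *\<^sub>R e - k)" for k t
  define g' where "g' k t = c k * pdiff i \<psi> (y + t *\<^sub>R e - k)" for k t
  define M where "M k = Cc * A1 * exp a * exp (- a * norm (y - k) powr s)" for k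
  have "((\<lambda>t. infsum (\<lambda>k. g k t) integer_points) has_vector_derivative infsum (\<lambda>k. g' k 0) integer_points) (at 0)"
  proof (rule termwise_vd)
    fix k :: "real^'n" and t :: real
    assume t: "\<bar>t\<bar> < 1"
    have eq: "\<And>t. y + t *\<^sub>R e - k = (y - k) + t *\<^sub>R e" by (simp add: algebra_simps)
    have "((\<lambda>t. \<psi> ((y - k) + t *\<^sub>R axis i 1)) has_vector_derivative pdiff i \<psi> ((y - k) + t *\<^sub>R axis i 1)) (at t)"
      by (rule path_vd[OF diff])
    then have "((\<lambda>t. c k * \<psi> ((y - k) + t *\<^sub>R axis i 1)) has_vector_derivative c k * pdiff i \<psi> ((y - k) + t *\<^sub>R axis i 1)) (at t)"
      by (rule has_vector_derivative_mult_right)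
    moreover have "g k = (\<lambda>t. c k * \<psi> ((y - k) + t *\<^sub>R axis i 1))"
      unfolding g_def e_def by (rule ext) (simp add: algebra_simps)
    moreover have "g' k t = c k * pdiff i \<psi> ((y - k) + t *\<^sub>R axis i 1)"
      unfolding g'_def e_def by (simp add: algebra_simps)
    ultimately show "(g k has_vector_derivative g' k t) (at t)" by simp
    have "norm (g' k t) = norm (c k) * norm (pdiff i \<psi> ((y - k) + t *\<^sub>R axis i 1))"
      unfolding g'_def e_def by (simp add: norm_mult algebra_simps)
    also have "\<dots> \<le> Cc * (A1 * exp (- a * norm ((y - k) + t *\<^sub>R axis i 1) powr s))"
      using cb b1 Cc by (intro mult_mono) auto
    also have "\<dots> \<le> Cc * (A1 * (exp a * exp (- a * norm (y - k) powr s)))"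
      using Cc A1 shift_exp_bound[of a s t "y - k" i] a s t by (intro mult_left_mono) auto
    finally show "norm (g' k t) \<le> M k" unfolding M_def by (simp add: mult_ac)
  next
    show "M summable_on integer_points"
      unfolding M_def using CL[of y] by (intro summable_on_cmult_right)
  next
    fix t :: real assume t: "\<bar>t\<bar> < 1"
    show "(\<lambda>k. g k t) summable_on integer_points"
    proof (rule summable_dom(1))
      show "(\<lambda>k. Cc * A0 * exp (- a * norm ((y + t *\<^sub>R e) - k) powr s)) summable_on integer_points"
        using CL[of "y + t *\<^sub>R e"] by (intro summable_on_cmult_right)
      fix k
      have "norm (g k t) = norm (c k) * norm (\<psi> ((y + t *\<^sub>R e) - k))" unfolding g_def by (simp add: norm_mult)
      also have "\<dots> \<le> Cc * (A0 * exp (- a * norm ((y + t *\<^sub>R e) - k) powr s))"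
        using cb b0 Cc by (intro mult_mono) auto
      finally show "norm (g k t) \<le> Cc * A0 * exp (- a * norm ((y + t *\<^sub>R e) - k) powr s)" by (simp add: mult_ac)
    qed
  qed
  then show "pdiff i (\<lambda>z. \<Sum>\<^sub>\<infinity>k\<in>integer_points. c k * \<psi> (z - k)) y
       = (\<Sum>\<^sub>\<infinity>k\<in>integer_points. c k * pdiff i \<psi> (y - k))"
    unfolding pdiff_def g_def g'_def e_def by (intro vector_derivative_at) simp
qed

lemma Dmulti_U:
  fixes \<psi> c :: "real^'n::finite \<Rightarrow> complex"
  assumes diff: "\<And>\<gamma> z. Dmulti \<gamma> \<psi> differentiable (at z)"
    and bnd: "\<And>\<gamma> z. norm (Dmulti \<gamma> \<psi> z) \<le> A \<gamma> * exp (- a * norm z powr s)"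
    and cb: "\<And>k. norm (c k) \<le> Cc"
    and a: "a > 0" and s: "0 < s" "s \<le> 1"
  shows "Dmulti \<gamma> (\<lambda>z. \<Sum>\<^sub>\<infinity>k\<in>integer_points. c k * \<psi> (z - k))
       = (\<lambda>z. \<Sum>\<^sub>\<infinity>k\<in>integer_points. c k * Dmulti \<gamma> \<psi> (z - k))"
proof -
  define T where "T = (\<lambda>(f :: real^'n \<Rightarrow> complex) z. \<Sum>\<^sub>\<infinity>k\<in>integer_points. c k * f (z - k))"
  have "Dmulti \<gamma> (T \<psi>) = T (Dmulti \<gamma> \<psi>)"
  proof (rule Dmulti_commute)
    fix \<gamma> \<gamma>' i assume e: "pdiff i (Dmulti \<gamma> \<psi>) = Dmulti \<gamma>' \<psi>"
    have "pdiff i (T (Dmulti \<gamma> \<psi>)) = T (pdiff i (Dmulti \<gamma> \<psi>))"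
      unfolding T_def
    proof (rule TW[OF diff bnd _ cb a s])
      fix z show "norm (pdiff i (Dmulti \<gamma> \<psi>) z) \<le> A \<gamma>' * exp (- a * norm z powr s)"
        unfolding e by (rule bnd)
    qed
    then show "pdiff i (T (Dmulti \<gamma> \<psi>)) = T (Dmulti \<gamma>' \<psi>)" unfolding e .
  qed
  then show ?thesis unfolding T_def .
qed

lemma Dmulti_0: "Dmulti (\<lambda>_. 0) f = f"
proof -
  have "Dmulti (\<lambda>_. 0) f = Dm coord_list (\<lambda>_. 0) f" unfolding Dmulti_def Dm_def ..
  also have "\<dots> = f" by (rule Dm_zero) simp
  finally show ?thesis .
qed

lemma exp_split:
  fixes c0 X Y Z :: real
  assumes "c0 > 0" "Z \<le> X + Y" "0 \<le> X" "0 \<le> Y"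
  shows "exp (- c0 * X) * exp (- c0 * Y) \<le> exp (- (c0 / 2) * Z) * exp (- (c0 / 2) * X)"
proof -
  have h1: "c0 * Z \<le> c0 * X + c0 * Y" using assms mult_left_mono[of Z "X + Y" c0] by (simp add: distrib_left)
  have h2: "0 \<le> c0 * Y" using assms by simp
  have "- (c0 * X) + - (c0 * Y) \<le> - ((c0 * Z) / 2) + - ((c0 * X) / 2)" using h1 h2 by linarith
  then have "exp (- (c0 * X) + - (c0 * Y)) \<le> exp (- ((c0 * Z) / 2) + - ((c0 * X) / 2))" by simp
  then show ?thesis by (simp add: exp_add[symmetric])
qed

theorem lemma4p3:
  fixes \<rho>1 \<rho>2 :: real
    and V :: "int \<Rightarrow> (real^'n::finite \<Rightarrow> complex) set"
    and \<phi> :: "real^'n \<Rightarrow> complex"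
  assumes "\<rho>1 \<ge> 0" and "\<rho>2 > 1"
    and "regular_MRA_with \<rho>1 \<rho>2 V \<phi>"
  shows "\<exists>C>0. \<exists>c>0. \<exists>h>0. \<forall>\<alpha> \<beta> x y.
     cmod (Dmulti \<alpha> (\<lambda>x'. Dmulti \<beta> (\<lambda>y'. kernel0 \<phi> x' y') y) x)
       \<le> C * h ^ (mi_abs \<alpha> + mi_abs \<beta>) * mi_fact \<alpha> powr \<rho>1 * mi_fact \<beta> powr \<rho>1
           * exp (- c * norm (x - y) powr (1 / \<rho>2))"
proof -
  have GS: "\<phi> \<in> GS \<rho>1 \<rho>2" using assms(3) unfolding regular_MRA_with_def by blast
  have diff: "\<And>\<gamma> z. Dmulti \<gamma> \<phi> differentiable (at z)"
    using GS unfolding GS_def schwartz_def smooth_fun_def by blast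
  have \<rho>2: "\<rho>2 > 0" using assms(2) by simp
  define s where "s = 1 / \<rho>2"
  have s: "0 < s" "s \<le> 1" unfolding s_def using assms(2) by auto
  obtain c0 h0 B where c0: "c0 > 0" and h0: "h0 > 0" and B: "B \<ge> 0"
    and dec: "\<And>\<beta> z. cmod (Dmulti \<beta> \<phi> z) \<le> B * (mi_fact \<beta> powr \<rho>1 / h0 ^ mi_abs \<beta>) * exp (- c0 * norm z powr s)"
    using gs_decay[OF \<rho>2 GS] unfolding s_def by blast
  define A where "A \<gamma> = B * (mi_fact \<gamma> powr \<rho>1 / h0 ^ mi_abs \<gamma>)" for \<gamma> :: "'n \<Rightarrow> nat"
  have A: "A \<gamma> \<ge> 0" for \<gamma> unfolding A_def using B h0 by simp
  have decA: "cmod (Dmulti \<gamma> \<phi> z) \<le> A \<gamma> * exp (- c0 * norm z powr s)" for \<gamma> z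
    using dec unfolding A_def .
  have decA': "cmod (Dmulti \<gamma> \<phi> z) \<le> A \<gamma>" for \<gamma> z
  proof -
    have "exp (- c0 * norm z powr s) \<le> 1" using c0 by simp
    then have "A \<gamma> * exp (- c0 * norm z powr s) \<le> A \<gamma>" using A[of \<gamma>] by (simp add: mult_left_le)
    then show ?thesis using decA[of \<gamma> z] by linarith
  qed
  define \<phi>c where "\<phi>c = (\<lambda>z. cnj (\<phi> z))"
  have Dc: "Dmulti \<gamma> \<phi>c = (\<lambda>z. cnj (Dmulti \<gamma> \<phi> z))" for \<gamma>
    unfolding \<phi>c_def by (rule Dmulti_cnj[OF diff])
  have diffc: "Dmulti \<gamma> \<phi>c differentiable (at z)" for \<gamma> z
    unfolding Dc using diff by (simp add: differentiable_cnj_iff)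
  have decc: "cmod (Dmulti \<gamma> \<phi>c z) \<le> A \<gamma> * exp (- c0 * norm z powr s)" for \<gamma> z
    unfolding Dc using decA by simp
  obtain CL where CL: "CL \<ge> 0" "\<And>x::real^'n. (\<lambda>k. exp (- (c0 / 2) * norm (x - k) powr s)) summable_on integer_points \<and>
      (\<Sum>\<^sub>\<infinity>k\<in>integer_points. exp (- (c0 / 2) * norm (x - k) powr s)) \<le> CL"
    using lattice_sum[of "c0 / 2" s, where 'n='n] c0 s by auto
  have main: "cmod (Dmulti \<alpha> (\<lambda>x'. Dmulti \<beta> (\<lambda>y'. kernel0 \<phi> x' y') y) x)
      \<le> A \<alpha> * A \<beta> * CL * exp (- (c0 / 2) * norm (x - y) powr s)" for \<alpha> \<beta> x y
  proof -
    have inner: "Dmulti \<beta> (\<lambda>y'. kernel0 \<phi> x' y') = (\<lambda>y'. \<Sum>\<^sub>\<infinity>k\<in>integer_points. \<phi> (x' - k) * Dmulti \<beta> \<phi>c (y' - k))" for x'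
    proof -
      have "(\<lambda>y'. kernel0 \<phi> x' y') = (\<lambda>y'. \<Sum>\<^sub>\<infinity>k\<in>integer_points. \<phi> (x' - k) * \<phi>c (y' - k))"
        unfolding kernel0_def \<phi>c_def ..
      moreover have "Dmulti \<beta> (\<lambda>y'. \<Sum>\<^sub>\<infinity>k\<in>integer_points. \<phi> (x' - k) * \<phi>c (y' - k))
          = (\<lambda>y'. \<Sum>\<^sub>\<infinity>k\<in>integer_points. \<phi> (x' - k) * Dmulti \<beta> \<phi>c (y' - k))"
      proof (rule Dmulti_U[OF diffc decc _ _ s])
        fix k show "cmod (\<phi> (x' - k)) \<le> A (\<lambda>_. 0)" using decA'[of "\<lambda>_. 0" "x' - k"] by (simp add: Dmulti_0)
      qed (use c0 in auto)
      ultimately show ?thesis by simp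
    qed
    define d where "d k = cnj (Dmulti \<beta> \<phi> (y - k))" for k
    have G: "(\<lambda>x'. Dmulti \<beta> (\<lambda>y'. kernel0 \<phi> x' y') y) = (\<lambda>x'. \<Sum>\<^sub>\<infinity>k\<in>integer_points. d k * \<phi> (x' - k))"
      unfolding inner d_def Dc by (simp add: mult.commute)
    have outer: "Dmulti \<alpha> (\<lambda>x'. \<Sum>\<^sub>\<infinity>k\<in>integer_points. d k * \<phi> (x' - k))
        = (\<lambda>x'. \<Sum>\<^sub>\<infinity>k\<in>integer_points. d k * Dmulti \<alpha> \<phi> (x' - k))"
    proof (rule Dmulti_U[OF diff decA _ _ s])
      fix k show "cmod (d k) \<le> A \<beta>" unfolding d_def using decA' by simp
    qed (use c0 in auto)
    define K where "K k = A \<alpha> * A \<beta> * exp (- (c0 / 2) * norm (x - y) powr s) * exp (- (c0 / 2) * norm (x - k) powr s)" for k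
    have Ks: "K summable_on integer_points"
      unfolding K_def using CL(2)[of x] by (intro summable_on_cmult_right) auto
    have Kb: "cmod (d k * Dmulti \<alpha> \<phi> (x - k)) \<le> K k" for k
    proof -
      have "cmod (d k * Dmulti \<alpha> \<phi> (x - k)) = cmod (Dmulti \<beta> \<phi> (y - k)) * cmod (Dmulti \<alpha> \<phi> (x - k))"
        unfolding d_def by (simp add: norm_mult)
      also have "\<dots> \<le> (A \<beta> * exp (- c0 * norm (y - k) powr s)) * (A \<alpha> * exp (- c0 * norm (x - k) powr s))"
        using decA A by (intro mult_mono) auto
      also have "\<dots> = A \<alpha> * A \<beta> * (exp (- c0 * norm (x - k) powr s) * exp (- c0 * norm (y - k) powr s))"
        by (simp add: mult_ac)
      also have "\<dots> \<le> A \<alpha> * A \<beta> * (exp (- (c0 / 2) * norm (x - y) powr s) * exp (- (c0 / 2) * norm (x - k) powr s))"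
      proof (intro mult_left_mono exp_split c0)
        have "norm (x - y) \<le> norm (x - k) + norm (y - k)"
          using norm_triangle_ineq4[of "x - k" "y - k"] by simp
        then have "norm (x - y) powr s \<le> (norm (x - k) + norm (y - k)) powr s"
          using s by (intro powr_mono2) auto
        also have "\<dots> \<le> norm (x - k) powr s + norm (y - k) powr s"
          using s by (intro powr_subadd) auto
        finally show "norm (x - y) powr s \<le> norm (x - k) powr s + norm (y - k) powr s" .
      qed (use A in auto)
      finally show ?thesis unfolding K_def by (simp add: mult_ac)
    qed
    have ns: "(\<lambda>k. cmod (d k * Dmulti \<alpha> \<phi> (x - k))) summable_on integer_points"
      using Kb by (intro summable_dom(2)[OF Ks]) auto
    have "cmod (Dmulti \<alpha> (\<lambda>x'. Dmulti \<beta> (\<lambda>y'. kernel0 \<phi> x' y') y) x)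
        = cmod (\<Sum>\<^sub>\<infinity>k\<in>integer_points. d k * Dmulti \<alpha> \<phi> (x - k))"
      unfolding G outer ..
    also have "\<dots> \<le> (\<Sum>\<^sub>\<infinity>k\<in>integer_points. cmod (d k * Dmulti \<alpha> \<phi> (x - k)))"
      using ns by (intro norm_infsum_bound) auto
    also have "\<dots> \<le> (\<Sum>\<^sub>\<infinity>k\<in>integer_points. K k)"
      using ns Ks Kb by (intro infsum_mono) auto
    also have "\<dots> = A \<alpha> * A \<beta> * exp (- (c0 / 2) * norm (x - y) powr s) *
        (\<Sum>\<^sub>\<infinity>k\<in>integer_points. exp (- (c0 / 2) * norm (x - k) powr s))"
      unfolding K_def by (rule infsum_cmult_right) (use CL(2)[of x] in auto)
    also have "\<dots> \<le> A \<alpha> * A \<beta> * exp (- (c0 / 2) * norm (x - y) powr s) * CL"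
      using CL(2)[of x] A by (intro mult_left_mono) auto
    finally show ?thesis by (simp add: mult_ac)
  qed
  define C where "C = B * B * CL + 1"
  have Cpos: "C > 0" unfolding C_def using B CL(1) by (simp add: add_nonneg_pos)
  have fin0: "cmod (Dmulti \<alpha> (\<lambda>x'. Dmulti \<beta> (\<lambda>y'. kernel0 \<phi> x' y') y) x)
       \<le> C * (1 / h0) ^ (mi_abs \<alpha> + mi_abs \<beta>) * mi_fact \<alpha> powr \<rho>1 * mi_fact \<beta> powr \<rho>1
           * exp (- (c0 / 2) * norm (x - y) powr (1 / \<rho>2))" for \<alpha> \<beta> x y
  proof -
    have eq: "A \<alpha> * A \<beta> * CL * exp (- (c0 / 2) * norm (x - y) powr s)
        = (B * B * CL) * (1 / h0) ^ (mi_abs \<alpha> + mi_abs \<beta>) * mi_fact \<alpha> powr \<rho>1 * mi_fact \<beta> powr \<rho>1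
           * exp (- (c0 / 2) * norm (x - y) powr s)"
      unfolding A_def by (simp add: power_add power_one_over field_simps)
    have "(B * B * CL) * (1 / h0) ^ (mi_abs \<alpha> + mi_abs \<beta>) * mi_fact \<alpha> powr \<rho>1 * mi_fact \<beta> powr \<rho>1
           * exp (- (c0 / 2) * norm (x - y) powr s)
        \<le> C * (1 / h0) ^ (mi_abs \<alpha> + mi_abs \<beta>) * mi_fact \<alpha> powr \<rho>1 * mi_fact \<beta> powr \<rho>1
           * exp (- (c0 / 2) * norm (x - y) powr s)"
      unfolding C_def using h0 by (intro mult_right_mono) auto
    then show ?thesis using main[of \<alpha> \<beta> y x] eq unfolding s_def by linarith
  qed
  have fin: "\<forall>\<alpha> \<beta> x y. cmod (Dmulti \<alpha> (\<lambda>x'. Dmulti \<beta> (\<lambda>y'. kernel0 \<phi> x' y') y) x)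
       \<le> C * (1 / h0) ^ (mi_abs \<alpha> + mi_abs \<beta>) * mi_fact \<alpha> powr \<rho>1 * mi_fact \<beta> powr \<rho>1
           * exp (- (c0 / 2) * norm (x - y) powr (1 / \<rho>2))" using fin0 by blast
  have c2: "c0 / 2 > 0" using c0 by simp
  have h2: "1 / h0 > 0" using h0 by simp
  show ?thesis using Cpos c2 h2 fin by blast
qed

end
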